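(* Let $Z\in\{0,1\}$, $S(1),S(0)\in\{0,1\}$ and a covariate vector $\mathbf{X}$ be random variables with $Z\perp\!\!\!\perp\{S(1),S(0),\mathbf{X}\}$ and observed $S=S(Z)$. Assume Monotonicity, $S(1)\ge S(0)$ almost surely. Then for any function $h$ of the covariates (with finite moments), $$E\{w_{1,s\bar{s}}(\mathbf{X})h(\mathbf{X})\mid Z=1,S=1\} = E\{w_{0,s\bar{s}}(\mathbf{X})h(\mathbf{X})\mid Z=0,S=0\},$$ $$E\{h(\mathbf{X})\mid Z=1,S=0\} = E\{w_{0,\bar{s}\bar{s}}(\mathbf{X})h(\mathbf{X})\mid Z=0,S=0\},$$ $$E\{w_{1,ss}(\mathbf{X})h(\mathbf{X})\mid Z=1,S=1\} = E\{h(\mathbf{X})\mid Z=0,S=1\},$$ where $w_{1,s\bar{s}}(\mathbf{X}) = \frac{e_{s\bar{s}}(\mathbf{X})}{e_{s\bar{s}}(\mathbf{X})+e_{ss}(\mathbf{X})}\Big/\frac{\pi_{s\bar{s}}}{\pi_{s\bar{s}}+\pi_{ss}}$, $w_{0,s\bar{s}}(\mathbf{X}) = \frac{e_{s\bar{s}}(\mathbf{X})}{e_{s\bar{s}}(\mathbf{X})+e_{\bar{s}\bar{s}}(\mathbf{X})}\Big/\frac{\pi_{s\bar{s}}}{\pi_{s\bar{s}}+\pi_{\bar{s}\bar{s}}}$, $w_{0,\bar{s}\bar{s}}(\mathbf{X}) = \frac{e_{\bar{s}\bar{s}}(\mathbf{X})}{e_{s\bar{s}}(\mathbf{X})+e_{\bar{s}\bar{s}}(\mathbf{X})}\Big/\frac{\pi_{\bar{s}\bar{s}}}{\pi_{s\bar{s}}+\pi_{\bar{s}\bar{s}}}$,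 $w_{1,ss}(\mathbf{X}) = \frac{e_{ss}(\mathbf{X})}{e_{s\bar{s}}(\mathbf{X})+e_{ss}(\mathbf{X})}\Big/\frac{\pi_{ss}}{\pi_{s\bar{s}}+\pi_{ss}}$.
   Context: The principal stratum is $U=(S(1),S(0))$, whose values $(1,1),(1,0),(0,1),(0,0)$ are labelled $ss, s\bar{s}, \bar{s}s, \bar{s}\bar{s}$. Principal scores: $e_u(\mathbf{X}) = \Pr(U=u\mid \mathbf{X})$; proportions $\pi_u=\Pr(U=u)$. All conditioning events and denominators are assumed positive. *)

theory Defs
  imports "HOL-Probability.Probability"
begin

text \<open>Principal strata U = (S(1), S(0)) encoded as pairs of booleans:
  ss = (True,True), s-sbar = (True,False), sbar-s = (False,True), sbar-sbar = (False,False).\<close>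

abbreviation ss :: "bool \<times> bool" where "ss \<equiv> (True, True)"
abbreviation ssb :: "bool \<times> bool" where "ssb \<equiv> (True, False)"
abbreviation sbs :: "bool \<times> bool" where "sbs \<equiv> (False, True)"
abbreviation sbsb :: "bool \<times> bool" where "sbsb \<equiv> (False, False)"

definition cond_exp_event :: "'a measure \<Rightarrow> 'a set \<Rightarrow> ('a \<Rightarrow> real) \<Rightarrow> real" where
  "cond_exp_event M B f = (\<integral>\<omega>. indicator B \<omega> * f \<omega> \<partial>M) / measure M B"

text \<open>g is (a version of) the principal score e_u(x) = Pr(U = u | X = x):
  a measurable function of the covariates with Pr(U = u, X \<in> A) = E[1{X \<in> A} g(X)]
  for every measurable A.\<close>
definition principal_score ::
  "'a measure \<Rightarrow> 'b measure \<Rightarrow> ('a \<Rightarrow> 'b) \<Rightarrow> ('a \<Rightarrow> 'u) \<Rightarrow> 'u \<Rightarrow> ('b \<Rightarrow> real) \<Rightarrow> bool" where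
  "principal_score M N X U u g \<longleftrightarrow>
     g \<in> borel_measurable N \<and> integrable M (\<lambda>\<omega>. g (X \<omega>)) \<and>
     (\<forall>A\<in>sets N. measure M {\<omega>\<in>space M. U \<omega> = u \<and> X \<omega> \<in> A}
        = (\<integral>\<omega>. indicator (X -` A \<inter> space M) \<omega> * g (X \<omega>) \<partial>M))"

definition stratum_prop :: "'a measure \<Rightarrow> ('a \<Rightarrow> 'u) \<Rightarrow> 'u \<Rightarrow> real" where
  "stratum_prop M U u = measure M {\<omega>\<in>space M. U \<omega> = u}"

definition w1_ssb :: "(bool \<times> bool \<Rightarrow> 'b \<Rightarrow> real) \<Rightarrow> (bool \<times> bool \<Rightarrow> real) \<Rightarrow> 'b \<Rightarrow> real" where
  "w1_ssb e p x = (e ssb x / (e ssb x + e ss x)) / (p ssb / (p ssb + p ss))"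

definition w0_ssb :: "(bool \<times> bool \<Rightarrow> 'b \<Rightarrow> real) \<Rightarrow> (bool \<times> bool \<Rightarrow> real) \<Rightarrow> 'b \<Rightarrow> real" where
  "w0_ssb e p x = (e ssb x / (e ssb x + e sbsb x)) / (p ssb / (p ssb + p sbsb))"

definition w0_sbsb :: "(bool \<times> bool \<Rightarrow> 'b \<Rightarrow> real) \<Rightarrow> (bool \<times> bool \<Rightarrow> real) \<Rightarrow> 'b \<Rightarrow> real" where
  "w0_sbsb e p x = (e sbsb x / (e ssb x + e sbsb x)) / (p sbsb / (p ssb + p sbsb))"

definition w1_ss :: "(bool \<times> bool \<Rightarrow> 'b \<Rightarrow> real) \<Rightarrow> (bool \<times> bool \<Rightarrow> real) \<Rightarrow> 'b \<Rightarrow> real" where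
  "w1_ss e p x = (e ss x / (e ssb x + e ss x)) / (p ss / (p ssb + p ss))"

end

theory Submission
  imports Defs
begin


lemma indepA:
  fixes f :: "'d \<Rightarrow> real"
  assumes P: "prob_space M" and Zs: "Zs \<in> sets M" and Wm: "W \<in> measurable M D"
    and ind: "\<And>B. B \<in> sets D \<Longrightarrow> measure M {\<omega>\<in>space M. \<omega> \<in> Zs \<and> W \<omega> \<in> B}
               = measure M Zs * measure M {\<omega>\<in>space M. W \<omega> \<in> B}"
    and fm: "f \<in> borel_measurable D"
  shows "(\<integral>\<omega>. indicator Zs \<omega> * f (W \<omega>) \<partial>M) = measure M Zs * (\<integral>\<omega>. f (W \<omega>) \<partial>M)"
proof -
  interpret prob_space M by (rule P)
  let ?p = "measure M Zs"
  have eq: "distr (density M (\<lambda>\<omega>. ennreal (indicator Zs \<omega>))) D W = density (distr M D W) (\<lambda>_. ennreal ?p)"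
  proof (rule measure_eqI)
    show "sets (distr (density M (\<lambda>\<omega>. ennreal (indicator Zs \<omega>))) D W) = sets (density (distr M D W) (\<lambda>_. ennreal ?p))"
      by simp
  next
    fix A assume "A \<in> sets (distr (density M (\<lambda>\<omega>. ennreal (indicator Zs \<omega>))) D W)"
    hence A: "A \<in> sets D" by simp
    have WA: "W -` A \<inter> space M \<in> sets M" using Wm A by (rule measurable_sets)
    have Wm': "W \<in> measurable (density M (\<lambda>\<omega>. ennreal (indicator Zs \<omega>))) D"
      using Wm by (simp add: measurable_cong_sets[OF sets_density refl])
    have "emeasure (distr (density M (\<lambda>\<omega>. ennreal (indicator Zs \<omega>))) D W) A
        = emeasure (density M (indicator Zs)) (W -` A \<inter> space M)"
      using Wm' A by (simp add: emeasure_distr ennreal_indicator)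
    also have "\<dots> = emeasure M (Zs \<inter> (W -` A \<inter> space M))"
      by (rule emeasure_restricted[OF Zs WA])
    also have "Zs \<inter> (W -` A \<inter> space M) = {\<omega>\<in>space M. \<omega> \<in> Zs \<and> W \<omega> \<in> A}" by auto
    also have "emeasure M \<dots> = ennreal (?p * measure M {\<omega>\<in>space M. W \<omega> \<in> A})"
      using ind[OF A] by (simp add: emeasure_eq_measure)
    also have "\<dots> = ennreal ?p * emeasure (distr M D W) A"
    proof -
      have "W -` A \<inter> space M = {\<omega>\<in>space M. W \<omega> \<in> A}" by auto
      thus ?thesis using Wm A by (simp add: emeasure_distr emeasure_eq_measure ennreal_mult)
    qed
    also have "\<dots> = emeasure (density (distr M D W) (\<lambda>_. ennreal ?p)) A"
      using A by (simp add: emeasure_density nn_integral_cmult_indicator)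
    finally show "emeasure (distr (density M (\<lambda>\<omega>. ennreal (indicator Zs \<omega>))) D W) A = emeasure (density (distr M D W) (\<lambda>_. ennreal ?p)) A" .
  qed
  have Wm': "W \<in> measurable (density M (\<lambda>\<omega>. ennreal (indicator Zs \<omega>))) D"
    using Wm by (simp add: measurable_cong_sets[OF sets_density refl])
  have "(\<integral>\<omega>. indicator Zs \<omega> * f (W \<omega>) \<partial>M) = integral\<^sup>L (density M (\<lambda>\<omega>. ennreal (indicator Zs \<omega>))) (\<lambda>\<omega>. f (W \<omega>))"
    using Zs Wm fm by (subst integral_density) (auto intro: measurable_compose)
  also have "\<dots> = integral\<^sup>L (distr (density M (\<lambda>\<omega>. ennreal (indicator Zs \<omega>))) D W) f"
    using Wm' fm by (simp add: integral_distr)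
  also have "\<dots> = integral\<^sup>L (density (distr M D W) (\<lambda>_. ennreal ?p)) f" by (simp add: eq)
  also have "\<dots> = (\<integral>x. ?p * f x \<partial>distr M D W)"
    using fm by (subst integral_density) auto
  also have "\<dots> = ?p * (\<integral>\<omega>. f (W \<omega>) \<partial>M)"
    using Wm fm by (simp add: integral_distr)
  finally show ?thesis .
qed


lemma scoreB:
  fixes G g :: "'b \<Rightarrow> real"
  assumes P: "prob_space M" and Ev: "Ev \<in> sets M" and Xm: "X \<in> measurable M N"
    and Gm: "G \<in> borel_measurable N" and Gi: "integrable M (\<lambda>\<omega>. G (X \<omega>))"
    and sc: "\<And>A. A \<in> sets N \<Longrightarrow> measure M {\<omega>\<in>space M. \<omega> \<in> Ev \<and> X \<omega> \<in> A}
               = (\<integral>\<omega>. indicator (X -` A \<inter> space M) \<omega> * G (X \<omega>) \<partial>M)"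
    and gm: "g \<in> borel_measurable N"
  shows "(\<integral>\<omega>. indicator Ev \<omega> * g (X \<omega>) \<partial>M) = (\<integral>\<omega>. G (X \<omega>) * g (X \<omega>) \<partial>M)"
proof -
  interpret prob_space M by (rule P)
  have GXm: "(\<lambda>\<omega>. G (X \<omega>)) \<in> borel_measurable M" using Xm Gm by (rule measurable_compose)
  have intA: "\<And>A. A \<in> sets N \<Longrightarrow> integrable M (\<lambda>\<omega>. indicator (X -` A \<inter> space M) \<omega> * G (X \<omega>))"
  proof -
    fix A assume A: "A \<in> sets N"
    have "X -` A \<inter> space M \<in> sets M" using Xm A by (rule measurable_sets)
    thus "integrable M (\<lambda>\<omega>. indicator (X -` A \<inter> space M) \<omega> * G (X \<omega>))"
      using integrable_real_mult_indicator[OF _ Gi] by (simp add: mult.commute)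
  qed
  have nonneg: "AE \<omega> in M. 0 \<le> G (X \<omega>)"
  proof -
    define A0 where "A0 = {x\<in>space N. G x < 0}"
    have A0: "A0 \<in> sets N" unfolding A0_def using Gm by measurable
    let ?f = "\<lambda>\<omega>. - (indicator (X -` A0 \<inter> space M) \<omega> * G (X \<omega>))"
    have fi: "integrable M ?f" using intA[OF A0] by simp
    have fnn: "AE \<omega> in M. 0 \<le> ?f \<omega>"
      by (rule AE_I2) (auto simp: A0_def indicator_def)
    have "integral\<^sup>L M ?f = - measure M {\<omega>\<in>space M. \<omega> \<in> Ev \<and> X \<omega> \<in> A0}"
      using sc[OF A0] by simp
    also have "\<dots> \<le> 0" by simp
    finally have "integral\<^sup>L M ?f \<le> 0" .
    moreover have "integral\<^sup>L M ?f \<ge> 0" using integral_nonneg_AE[OF fnn] .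
    ultimately have "integral\<^sup>L M ?f = 0" by linarith
    hence "AE \<omega> in M. ?f \<omega> = 0" using integral_nonneg_eq_0_iff_AE[OF fi fnn] by simp
    thus ?thesis
    proof (rule AE_mp[OF _ AE_I2], intro impI)
      fix \<omega> assume "\<omega> \<in> space M" "?f \<omega> = 0"
      thus "0 \<le> G (X \<omega>)"
        using measurable_space[OF Xm] by (cases "G (X \<omega>) < 0") (auto simp: A0_def indicator_def)
    qed
  qed
  have nonnegD: "AE x in distr M N X. 0 \<le> G x"
    using nonneg Xm Gm by (subst AE_distr_iff) auto
  have Xm': "X \<in> measurable (density M (\<lambda>\<omega>. ennreal (indicator Ev \<omega>))) N"
    using Xm by (simp add: measurable_cong_sets[OF sets_density refl])
  have eq: "distr (density M (\<lambda>\<omega>. ennreal (indicator Ev \<omega>))) N X = density (distr M N X) (\<lambda>x. ennreal (G x))"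
  proof (rule measure_eqI)
    show "sets (distr (density M (\<lambda>\<omega>. ennreal (indicator Ev \<omega>))) N X) = sets (density (distr M N X) (\<lambda>x. ennreal (G x)))"
      by simp
  next
    fix A assume "A \<in> sets (distr (density M (\<lambda>\<omega>. ennreal (indicator Ev \<omega>))) N X)"
    hence A: "A \<in> sets N" by simp
    have XA: "X -` A \<inter> space M \<in> sets M" using Xm A by (rule measurable_sets)
    have "emeasure (distr (density M (\<lambda>\<omega>. ennreal (indicator Ev \<omega>))) N X) A
        = emeasure (density M (indicator Ev)) (X -` A \<inter> space M)"
      using Xm' A by (simp add: emeasure_distr ennreal_indicator)
    also have "\<dots> = emeasure M (Ev \<inter> (X -` A \<inter> space M))"
      by (rule emeasure_restricted[OF Ev XA])
    also have "Ev \<inter> (X -` A \<inter> space M) = {\<omega>\<in>space M. \<omega> \<in> Ev \<and> X \<omega> \<in> A}" by auto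
    also have "emeasure M \<dots> = ennreal (\<integral>\<omega>. indicator (X -` A \<inter> space M) \<omega> * G (X \<omega>) \<partial>M)"
      using sc[OF A] by (simp add: emeasure_eq_measure)
    also have "\<dots> = (\<integral>\<^sup>+\<omega>. ennreal (indicator (X -` A \<inter> space M) \<omega> * G (X \<omega>)) \<partial>M)"
    proof (rule nn_integral_eq_integral[symmetric])
      show "integrable M (\<lambda>\<omega>. indicator (X -` A \<inter> space M) \<omega> * G (X \<omega>))" by (rule intA[OF A])
      show "AE \<omega> in M. 0 \<le> indicator (X -` A \<inter> space M) \<omega> * G (X \<omega>)"
        using nonneg by eventually_elim auto
    qed
    also have "\<dots> = (\<integral>\<^sup>+\<omega>. ennreal (G (X \<omega>)) * indicator A (X \<omega>) \<partial>M)"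
      by (rule nn_integral_cong) (auto simp: indicator_def)
    also have "\<dots> = (\<integral>\<^sup>+x. ennreal (G x) * indicator A x \<partial>distr M N X)"
      using Xm Gm A by (subst nn_integral_distr) auto
    also have "\<dots> = emeasure (density (distr M N X) (\<lambda>x. ennreal (G x))) A"
      using A Gm by (simp add: emeasure_density)
    finally show "emeasure (distr (density M (\<lambda>\<omega>. ennreal (indicator Ev \<omega>))) N X) A = emeasure (density (distr M N X) (\<lambda>x. ennreal (G x))) A" .
  qed
  have "(\<integral>\<omega>. indicator Ev \<omega> * g (X \<omega>) \<partial>M) = integral\<^sup>L (density M (\<lambda>\<omega>. ennreal (indicator Ev \<omega>))) (\<lambda>\<omega>. g (X \<omega>))"
    using Ev Xm gm by (subst integral_density) (auto intro: measurable_compose)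
  also have "\<dots> = integral\<^sup>L (distr (density M (\<lambda>\<omega>. ennreal (indicator Ev \<omega>))) N X) g"
    using Xm' gm by (simp add: integral_distr)
  also have "\<dots> = integral\<^sup>L (density (distr M N X) (\<lambda>x. ennreal (G x))) g" by (simp add: eq)
  also have "\<dots> = (\<integral>x. G x * g x \<partial>distr M N X)"
    using gm Gm nonnegD by (subst integral_density) auto
  also have "\<dots> = (\<integral>\<omega>. G (X \<omega>) * g (X \<omega>) \<partial>M)"
    using Xm gm Gm by (simp add: integral_distr)
  finally show ?thesis .
qed




lemma alg:
  fixes F D a p P hh :: real
  assumes "F = D" "D \<noteq> 0" "p \<noteq> 0" "P \<noteq> 0"
  shows "F * ((a / D) / (p / P) * hh) = a * hh * (P / p)"
  using assms by (simp add: field_simps)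


lemma alg2:
  fixes I P Q p :: real
  assumes "Q = P" "P \<noteq> 0" "p \<noteq> 0"
  shows "I * (P / p) / Q = I / p"
  using assms by (simp add: field_simps)

theorem corollary2:
  fixes M :: "'a measure" and N :: "'b measure"
    and Z S1 S0 :: "'a \<Rightarrow> bool" and X :: "'a \<Rightarrow> 'b"
    and e :: "bool \<times> bool \<Rightarrow> 'b \<Rightarrow> real" and h :: "'b \<Rightarrow> real"
  defines "U \<equiv> (\<lambda>\<omega>. (S1 \<omega>, S0 \<omega>))"
    and "S \<equiv> (\<lambda>\<omega>. if Z \<omega> then S1 \<omega> else S0 \<omega>)"
    and "\<pi> \<equiv> stratum_prop M (\<lambda>\<omega>. (S1 \<omega>, S0 \<omega>))"
  assumes P: "prob_space M"
    and Zm: "Z \<in> measurable M (count_space UNIV)"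
    and S1m: "S1 \<in> measurable M (count_space UNIV)"
    and S0m: "S0 \<in> measurable M (count_space UNIV)"
    and Xm: "X \<in> measurable M N"
    and indep: "\<And>z B. B \<in> sets (count_space UNIV \<Otimes>\<^sub>M count_space UNIV \<Otimes>\<^sub>M N) \<Longrightarrow>
              measure M {\<omega>\<in>space M. Z \<omega> = z \<and> (S1 \<omega>, S0 \<omega>, X \<omega>) \<in> B}
              = measure M {\<omega>\<in>space M. Z \<omega> = z} * measure M {\<omega>\<in>space M. (S1 \<omega>, S0 \<omega>, X \<omega>) \<in> B}"
    and mono: "AE \<omega> in M. S0 \<omega> \<longrightarrow> S1 \<omega>"
    and scores: "\<And>u. principal_score M N X U u (e u)"
    and hm: "h \<in> borel_measurable N"
    and hint: "integrable M (\<lambda>\<omega>. h (X \<omega>))"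
    and pos_Z1S1: "measure M {\<omega>\<in>space M. Z \<omega> \<and> S \<omega>} > 0"
    and pos_Z1S0: "measure M {\<omega>\<in>space M. Z \<omega> \<and> \<not> S \<omega>} > 0"
    and pos_Z0S1: "measure M {\<omega>\<in>space M. \<not> Z \<omega> \<and> S \<omega>} > 0"
    and pos_Z0S0: "measure M {\<omega>\<in>space M. \<not> Z \<omega> \<and> \<not> S \<omega>} > 0"
    and pos_ss: "\<pi> ss > 0" and pos_ssb: "\<pi> ssb > 0" and pos_sbsb: "\<pi> sbsb > 0"
    and den1: "AE \<omega> in M. e ssb (X \<omega>) + e ss (X \<omega>) > 0"
    and den0: "AE \<omega> in M. e ssb (X \<omega>) + e sbsb (X \<omega>) > 0"
  shows "(cond_exp_event M {\<omega>\<in>space M. Z \<omega> \<and> S \<omega>} (\<lambda>\<omega>. w1_ssb e \<pi> (X \<omega>) * h (X \<omega>))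
           = cond_exp_event M {\<omega>\<in>space M. \<not> Z \<omega> \<and> \<not> S \<omega>} (\<lambda>\<omega>. w0_ssb e \<pi> (X \<omega>) * h (X \<omega>))) \<and>
         (cond_exp_event M {\<omega>\<in>space M. Z \<omega> \<and> \<not> S \<omega>} (\<lambda>\<omega>. h (X \<omega>))
           = cond_exp_event M {\<omega>\<in>space M. \<not> Z \<omega> \<and> \<not> S \<omega>} (\<lambda>\<omega>. w0_sbsb e \<pi> (X \<omega>) * h (X \<omega>))) \<and>
         (cond_exp_event M {\<omega>\<in>space M. Z \<omega> \<and> S \<omega>} (\<lambda>\<omega>. w1_ss e \<pi> (X \<omega>) * h (X \<omega>))
           = cond_exp_event M {\<omega>\<in>space M. \<not> Z \<omega> \<and> S \<omega>} (\<lambda>\<omega>. h (X \<omega>)))"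
  
proof -
  interpret prob_space M by (rule P)
  note [measurable] = Zm S1m S0m Xm hm
  have em[measurable]: "\<And>u. e u \<in> borel_measurable N"
    and ei: "\<And>u. integrable M (\<lambda>\<omega>. e u (X \<omega>))"
    and esc: "\<And>u A. A \<in> sets N \<Longrightarrow> measure M {\<omega>\<in>space M. (S1 \<omega>, S0 \<omega>) = u \<and> X \<omega> \<in> A}
        = (\<integral>\<omega>. indicator (X -` A \<inter> space M) \<omega> * e u (X \<omega>) \<partial>M)"
    using scores unfolding principal_score_def U_def by auto
  define E where "E u = {\<omega>\<in>space M. (S1 \<omega>, S0 \<omega>) = u}" for u
  have Es[measurable]: "E u \<in> sets M" for u unfolding E_def by measurable
  have piE: "\<pi> u = measure M (E u)" for u unfolding \<pi>_def stratum_prop_def E_def by simp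
  define W where "W = (\<lambda>\<omega>. (S1 \<omega>, S0 \<omega>, X \<omega>))"
  have Wm: "W \<in> measurable M (count_space UNIV \<Otimes>\<^sub>M count_space UNIV \<Otimes>\<^sub>M N)"
    unfolding W_def by measurable
  have keyZ: "(\<integral>\<omega>. indicator {\<omega>\<in>space M. Z \<omega> = z \<and> C (S1 \<omega>) (S0 \<omega>)} \<omega> * g (X \<omega>) \<partial>M)
     = measure M {\<omega>\<in>space M. Z \<omega> = z} * (\<integral>\<omega>. indicator {\<omega>\<in>space M. C (S1 \<omega>) (S0 \<omega>)} \<omega> * g (X \<omega>) \<partial>M)"
    if gm: "g \<in> borel_measurable N" for z C g
  proof -
    define f where "f w = of_bool (C (fst w) (fst (snd w))) * g (snd (snd w))" for w :: "bool \<times> bool \<times> 'b"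
    have fm: "f \<in> borel_measurable (count_space UNIV \<Otimes>\<^sub>M count_space UNIV \<Otimes>\<^sub>M N)"
      unfolding f_def using gm by measurable
    have Zs: "{\<omega>\<in>space M. Z \<omega> = z} \<in> sets M" by measurable
    have ind: "measure M {\<omega>\<in>space M. \<omega> \<in> {\<omega>\<in>space M. Z \<omega> = z} \<and> W \<omega> \<in> B}
               = measure M {\<omega>\<in>space M. Z \<omega> = z} * measure M {\<omega>\<in>space M. W \<omega> \<in> B}"
      if "B \<in> sets (count_space UNIV \<Otimes>\<^sub>M count_space UNIV \<Otimes>\<^sub>M N)" for B
    proof -
      have "{\<omega>\<in>space M. \<omega> \<in> {\<omega>\<in>space M. Z \<omega> = z} \<and> W \<omega> \<in> B} = {\<omega>\<in>space M. Z \<omega> = z \<and> (S1 \<omega>, S0 \<omega>, X \<omega>) \<in> B}"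
        unfolding W_def by auto
      thus ?thesis using indep[OF that] unfolding W_def by simp
    qed
    have "(\<integral>\<omega>. indicator {\<omega>\<in>space M. Z \<omega> = z \<and> C (S1 \<omega>) (S0 \<omega>)} \<omega> * g (X \<omega>) \<partial>M)
        = (\<integral>\<omega>. indicator {\<omega>\<in>space M. Z \<omega> = z} \<omega> * f (W \<omega>) \<partial>M)"
      by (rule Bochner_Integration.integral_cong) (auto simp: indicator_def f_def W_def)
    also have "\<dots> = measure M {\<omega>\<in>space M. Z \<omega> = z} * (\<integral>\<omega>. f (W \<omega>) \<partial>M)"
      by (rule indepA[OF P Zs Wm ind fm])
    also have "(\<integral>\<omega>. f (W \<omega>) \<partial>M) = (\<integral>\<omega>. indicator {\<omega>\<in>space M. C (S1 \<omega>) (S0 \<omega>)} \<omega> * g (X \<omega>) \<partial>M)"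
      by (rule Bochner_Integration.integral_cong) (auto simp: indicator_def f_def W_def)
    finally show ?thesis .
  qed
  have condC: "cond_exp_event M {\<omega>\<in>space M. Z \<omega> = z \<and> C (S1 \<omega>) (S0 \<omega>)} (\<lambda>\<omega>. g (X \<omega>))
     = (\<integral>\<omega>. indicator {\<omega>\<in>space M. C (S1 \<omega>) (S0 \<omega>)} \<omega> * g (X \<omega>) \<partial>M) / measure M {\<omega>\<in>space M. C (S1 \<omega>) (S0 \<omega>)}"
    if gm: "g \<in> borel_measurable N" and pos: "measure M {\<omega>\<in>space M. Z \<omega> = z \<and> C (S1 \<omega>) (S0 \<omega>)} > 0" for z C g
  proof -
    have one: "(\<integral>\<omega>. indicator F \<omega> * (\<lambda>_. 1::real) (X \<omega>) \<partial>M) = measure M F" if "F \<in> sets M" for F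
      using that by (simp add: Int_absorb2 sets.sets_into_space)
    have s1: "{\<omega>\<in>space M. Z \<omega> = z \<and> C (S1 \<omega>) (S0 \<omega>)} \<in> sets M" by measurable
    have s2: "{\<omega>\<in>space M. C (S1 \<omega>) (S0 \<omega>)} \<in> sets M" by measurable
    have m: "measure M {\<omega>\<in>space M. Z \<omega> = z \<and> C (S1 \<omega>) (S0 \<omega>)}
       = measure M {\<omega>\<in>space M. Z \<omega> = z} * measure M {\<omega>\<in>space M. C (S1 \<omega>) (S0 \<omega>)}"
      using keyZ[of "\<lambda>_. 1" z C] one[OF s1] one[OF s2] by simp
    have "measure M {\<omega>\<in>space M. Z \<omega> = z} \<noteq> 0" using pos m by auto
    thus ?thesis unfolding cond_exp_event_def keyZ[OF gm] m by simp
  qed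
  have scoreU: "(\<integral>\<omega>. indicator (E u) \<omega> * g (X \<omega>) \<partial>M) = (\<integral>\<omega>. e u (X \<omega>) * g (X \<omega>) \<partial>M)"
    if gm: "g \<in> borel_measurable N" for u g
    by (rule scoreB[OF P Es Xm em ei _ gm]) (simp add: E_def esc)
  have scoreU2: "(\<integral>\<omega>. indicator (E u \<union> E v) \<omega> * g (X \<omega>) \<partial>M) = (\<integral>\<omega>. (e u (X \<omega>) + e v (X \<omega>)) * g (X \<omega>) \<partial>M)"
    if gm: "g \<in> borel_measurable N" and uv: "u \<noteq> v" for u v g
  proof (rule scoreB[OF P _ Xm _ _ _ gm])
    show "E u \<union> E v \<in> sets M" by simp
    show "(\<lambda>x. e u x + e v x) \<in> borel_measurable N" by measurable
    show "integrable M (\<lambda>\<omega>. e u (X \<omega>) + e v (X \<omega>))" using ei by simp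
    fix A assume A: "A \<in> sets N"
    have XA: "X -` A \<inter> space M \<in> sets M" using Xm A by (rule measurable_sets)
    have "{\<omega>\<in>space M. \<omega> \<in> E u \<union> E v \<and> X \<omega> \<in> A} = {\<omega>\<in>space M. (S1 \<omega>, S0 \<omega>) = u \<and> X \<omega> \<in> A} \<union> {\<omega>\<in>space M. (S1 \<omega>, S0 \<omega>) = v \<and> X \<omega> \<in> A}"
      unfolding E_def by auto
    also have "measure M \<dots> = measure M {\<omega>\<in>space M. (S1 \<omega>, S0 \<omega>) = u \<and> X \<omega> \<in> A} + measure M {\<omega>\<in>space M. (S1 \<omega>, S0 \<omega>) = v \<and> X \<omega> \<in> A}"
      using uv A by (intro finite_measure_Union) (measurable, auto)
    also have "\<dots> = (\<integral>\<omega>. indicator (X -` A \<inter> space M) \<omega> * e u (X \<omega>) \<partial>M) + (\<integral>\<omega>. indicator (X -` A \<inter> space M) \<omega> * e v (X \<omega>) \<partial>M)"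
      using esc[OF A] by simp
    also have "\<dots> = (\<integral>\<omega>. indicator (X -` A \<inter> space M) \<omega> * e u (X \<omega>) + indicator (X -` A \<inter> space M) \<omega> * e v (X \<omega>) \<partial>M)"
      using integrable_real_mult_indicator[OF XA ei] by (subst Bochner_Integration.integral_add) (auto simp: mult.commute)
    also have "\<dots> = (\<integral>\<omega>. indicator (X -` A \<inter> space M) \<omega> * (e u (X \<omega>) + e v (X \<omega>)) \<partial>M)"
      by (simp add: distrib_left)
    finally show "measure M {\<omega>\<in>space M. \<omega> \<in> E u \<union> E v \<and> X \<omega> \<in> A} = (\<integral>\<omega>. indicator (X -` A \<inter> space M) \<omega> * (e u (X \<omega>) + e v (X \<omega>)) \<partial>M)" .
  qed

  have p1: "\<pi> ssb > 0" and p2: "\<pi> ss > 0" and p3: "\<pi> sbsb > 0" using pos_ss pos_ssb pos_sbsb by auto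
  have ev1: "{\<omega>\<in>space M. Z \<omega> \<and> S \<omega>} = {\<omega>\<in>space M. Z \<omega> = True \<and> S1 \<omega>}" unfolding S_def by auto
  have ev2: "{\<omega>\<in>space M. \<not> Z \<omega> \<and> \<not> S \<omega>} = {\<omega>\<in>space M. Z \<omega> = False \<and> \<not> S0 \<omega>}" unfolding S_def by auto
  have ev3: "{\<omega>\<in>space M. Z \<omega> \<and> \<not> S \<omega>} = {\<omega>\<in>space M. Z \<omega> = True \<and> \<not> S1 \<omega>}" unfolding S_def by auto
  have ev4: "{\<omega>\<in>space M. \<not> Z \<omega> \<and> S \<omega>} = {\<omega>\<in>space M. Z \<omega> = False \<and> S0 \<omega>}" unfolding S_def by auto
  have st1: "{\<omega>\<in>space M. S1 \<omega>} = E ss \<union> E ssb" unfolding E_def by auto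
  have st2: "{\<omega>\<in>space M. \<not> S0 \<omega>} = E ssb \<union> E sbsb" unfolding E_def by auto
  have ae3: "AE \<omega> in M. \<omega> \<in> {\<omega>\<in>space M. \<not> S1 \<omega>} \<longleftrightarrow> \<omega> \<in> E sbsb"
    using mono by eventually_elim (auto simp: E_def)
  have ae4: "AE \<omega> in M. \<omega> \<in> {\<omega>\<in>space M. S0 \<omega>} \<longleftrightarrow> \<omega> \<in> E ss"
    using mono by eventually_elim (auto simp: E_def)
  have m1: "measure M {\<omega>\<in>space M. S1 \<omega>} = \<pi> ss + \<pi> ssb"
    unfolding st1 piE by (rule finite_measure_Union) (auto simp: E_def)
  have m2: "measure M {\<omega>\<in>space M. \<not> S0 \<omega>} = \<pi> ssb + \<pi> sbsb"
    unfolding st2 piE by (rule finite_measure_Union) (auto simp: E_def)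
  have m3: "measure M {\<omega>\<in>space M. \<not> S1 \<omega>} = \<pi> sbsb"
    unfolding piE by (rule measure_eq_AE[OF ae3]) auto
  have m4: "measure M {\<omega>\<in>space M. S0 \<omega>} = \<pi> ss"
    unfolding piE by (rule measure_eq_AE[OF ae4]) auto
  have i1: "(\<integral>\<omega>. indicator {\<omega>\<in>space M. S1 \<omega>} \<omega> * g (X \<omega>) \<partial>M) = (\<integral>\<omega>. (e ss (X \<omega>) + e ssb (X \<omega>)) * g (X \<omega>) \<partial>M)"
    if "g \<in> borel_measurable N" for g unfolding st1 by (rule scoreU2[OF that]) simp
  have i2: "(\<integral>\<omega>. indicator {\<omega>\<in>space M. \<not> S0 \<omega>} \<omega> * g (X \<omega>) \<partial>M) = (\<integral>\<omega>. (e ssb (X \<omega>) + e sbsb (X \<omega>)) * g (X \<omega>) \<partial>M)"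
    if "g \<in> borel_measurable N" for g unfolding st2 by (rule scoreU2[OF that]) simp
  have i3: "(\<integral>\<omega>. indicator {\<omega>\<in>space M. \<not> S1 \<omega>} \<omega> * g (X \<omega>) \<partial>M) = (\<integral>\<omega>. e sbsb (X \<omega>) * g (X \<omega>) \<partial>M)"
    if gm: "g \<in> borel_measurable N" for g
  proof -
    have "(\<integral>\<omega>. indicator {\<omega>\<in>space M. \<not> S1 \<omega>} \<omega> * g (X \<omega>) \<partial>M) = (\<integral>\<omega>. indicator (E sbsb) \<omega> * g (X \<omega>) \<partial>M)"
    proof -
      have "AE \<omega> in M. indicator {\<omega>\<in>space M. \<not> S1 \<omega>} \<omega> * g (X \<omega>) = indicator (E sbsb) \<omega> * g (X \<omega>)"
        using ae3 by eventually_elim (auto simp: indicator_def)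
      moreover have "(\<lambda>\<omega>. indicator {\<omega>\<in>space M. \<not> S1 \<omega>} \<omega> * g (X \<omega>)) \<in> borel_measurable M" using gm by measurable
      moreover have "(\<lambda>\<omega>. indicator (E sbsb) \<omega> * g (X \<omega>)) \<in> borel_measurable M" using gm by measurable
      ultimately show ?thesis by (intro integral_cong_AE)
    qed
    thus ?thesis using scoreU[OF gm] by simp
  qed
  have i4: "(\<integral>\<omega>. indicator {\<omega>\<in>space M. S0 \<omega>} \<omega> * g (X \<omega>) \<partial>M) = (\<integral>\<omega>. e ss (X \<omega>) * g (X \<omega>) \<partial>M)"
    if gm: "g \<in> borel_measurable N" for g
  proof -
    have "(\<integral>\<omega>. indicator {\<omega>\<in>space M. S0 \<omega>} \<omega> * g (X \<omega>) \<partial>M) = (\<integral>\<omega>. indicator (E ss) \<omega> * g (X \<omega>) \<partial>M)"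
    proof -
      have "AE \<omega> in M. indicator {\<omega>\<in>space M. S0 \<omega>} \<omega> * g (X \<omega>) = indicator (E ss) \<omega> * g (X \<omega>)"
        using ae4 by eventually_elim (auto simp: indicator_def)
      moreover have "(\<lambda>\<omega>. indicator {\<omega>\<in>space M. S0 \<omega>} \<omega> * g (X \<omega>)) \<in> borel_measurable M" using gm by measurable
      moreover have "(\<lambda>\<omega>. indicator (E ss) \<omega> * g (X \<omega>)) \<in> borel_measurable M" using gm by measurable
      ultimately show ?thesis by (intro integral_cong_AE)
    qed
    thus ?thesis using scoreU[OF gm] by simp
  qed
  have w1m[measurable]: "w1_ssb e \<pi> \<in> borel_measurable N" unfolding w1_ssb_def by measurable
  have w2m[measurable]: "w0_ssb e \<pi> \<in> borel_measurable N" unfolding w0_ssb_def by measurable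
  have w3m[measurable]: "w0_sbsb e \<pi> \<in> borel_measurable N" unfolding w0_sbsb_def by measurable
  have w4m[measurable]: "w1_ss e \<pi> \<in> borel_measurable N" unfolding w1_ss_def by measurable
  define T where "T u = (\<integral>\<omega>. e u (X \<omega>) * h (X \<omega>) \<partial>M) / \<pi> u" for u
  have "cond_exp_event M {\<omega>\<in>space M. Z \<omega> \<and> S \<omega>} (\<lambda>\<omega>. w1_ssb e \<pi> (X \<omega>) * h (X \<omega>))
      = (\<integral>\<omega>. (e ss (X \<omega>) + e ssb (X \<omega>)) * (w1_ssb e \<pi> (X \<omega>) * h (X \<omega>)) \<partial>M) / (\<pi> ss + \<pi> ssb)"
    unfolding ev1 using condC[of "\<lambda>x. w1_ssb e \<pi> x * h x" True "\<lambda>a b. a"] pos_Z1S1 ev1 i1[of "\<lambda>x. w1_ssb e \<pi> x * h x"] m1 by simp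
  also have "(\<integral>\<omega>. (e ss (X \<omega>) + e ssb (X \<omega>)) * (w1_ssb e \<pi> (X \<omega>) * h (X \<omega>)) \<partial>M)
      = (\<integral>\<omega>. e ssb (X \<omega>) * h (X \<omega>) * ((\<pi> ssb + \<pi> ss) / \<pi> ssb) \<partial>M)"
  proof -
    have "AE \<omega> in M. (e ss (X \<omega>) + e ssb (X \<omega>)) * (w1_ssb e \<pi> (X \<omega>) * h (X \<omega>)) = e ssb (X \<omega>) * h (X \<omega>) * ((\<pi> ssb + \<pi> ss) / \<pi> ssb)"
      using den1 proof eventually_elim
      case (elim \<omega>) thus ?case unfolding w1_ssb_def by (intro alg) (use p1 p2 in auto)
    qed
    thus ?thesis by (intro integral_cong_AE) (measurable)
  qed
  also have "(\<integral>\<omega>. e ssb (X \<omega>) * h (X \<omega>) * ((\<pi> ssb + \<pi> ss) / \<pi> ssb) \<partial>M) / (\<pi> ss + \<pi> ssb) = T ssb" unfolding T_def integral_mult_left_zero by (rule alg2) (use p1 p2 in auto)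
  finally have L1: "cond_exp_event M {\<omega>\<in>space M. Z \<omega> \<and> S \<omega>} (\<lambda>\<omega>. w1_ssb e \<pi> (X \<omega>) * h (X \<omega>)) = T ssb" .
  have "cond_exp_event M {\<omega>\<in>space M. \<not> Z \<omega> \<and> \<not> S \<omega>} (\<lambda>\<omega>. w0_ssb e \<pi> (X \<omega>) * h (X \<omega>))
      = (\<integral>\<omega>. (e ssb (X \<omega>) + e sbsb (X \<omega>)) * (w0_ssb e \<pi> (X \<omega>) * h (X \<omega>)) \<partial>M) / (\<pi> ssb + \<pi> sbsb)"
    unfolding ev2 using condC[of "\<lambda>x. w0_ssb e \<pi> x * h x" False "\<lambda>a b. \<not> b"] pos_Z0S0 ev2 i2[of "\<lambda>x. w0_ssb e \<pi> x * h x"] m2 by simp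
  also have "(\<integral>\<omega>. (e ssb (X \<omega>) + e sbsb (X \<omega>)) * (w0_ssb e \<pi> (X \<omega>) * h (X \<omega>)) \<partial>M)
      = (\<integral>\<omega>. e ssb (X \<omega>) * h (X \<omega>) * ((\<pi> ssb + \<pi> sbsb) / \<pi> ssb) \<partial>M)"
  proof -
    have "AE \<omega> in M. (e ssb (X \<omega>) + e sbsb (X \<omega>)) * (w0_ssb e \<pi> (X \<omega>) * h (X \<omega>)) = e ssb (X \<omega>) * h (X \<omega>) * ((\<pi> ssb + \<pi> sbsb) / \<pi> ssb)"
      using den0 proof eventually_elim
      case (elim \<omega>) thus ?case unfolding w0_ssb_def by (intro alg) (use p1 p3 in auto)
    qed
    thus ?thesis by (intro integral_cong_AE) (measurable)
  qed
  also have "(\<integral>\<omega>. e ssb (X \<omega>) * h (X \<omega>) * ((\<pi> ssb + \<pi> sbsb) / \<pi> ssb) \<partial>M) / (\<pi> ssb + \<pi> sbsb) = T ssb" unfolding T_def integral_mult_left_zero by (rule alg2) (use p1 p3 in auto)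
  finally have R1: "cond_exp_event M {\<omega>\<in>space M. \<not> Z \<omega> \<and> \<not> S \<omega>} (\<lambda>\<omega>. w0_ssb e \<pi> (X \<omega>) * h (X \<omega>)) = T ssb" .
  have L2: "cond_exp_event M {\<omega>\<in>space M. Z \<omega> \<and> \<not> S \<omega>} (\<lambda>\<omega>. h (X \<omega>)) = T sbsb"
    unfolding ev3 T_def using condC[of h True "\<lambda>a b. \<not> a"] pos_Z1S0 ev3 i3[of h] m3 by simp
  have "cond_exp_event M {\<omega>\<in>space M. \<not> Z \<omega> \<and> \<not> S \<omega>} (\<lambda>\<omega>. w0_sbsb e \<pi> (X \<omega>) * h (X \<omega>))
      = (\<integral>\<omega>. (e ssb (X \<omega>) + e sbsb (X \<omega>)) * (w0_sbsb e \<pi> (X \<omega>) * h (X \<omega>)) \<partial>M) / (\<pi> ssb + \<pi> sbsb)"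
    unfolding ev2 using condC[of "\<lambda>x. w0_sbsb e \<pi> x * h x" False "\<lambda>a b. \<not> b"] pos_Z0S0 ev2 i2[of "\<lambda>x. w0_sbsb e \<pi> x * h x"] m2 by simp
  also have "(\<integral>\<omega>. (e ssb (X \<omega>) + e sbsb (X \<omega>)) * (w0_sbsb e \<pi> (X \<omega>) * h (X \<omega>)) \<partial>M)
      = (\<integral>\<omega>. e sbsb (X \<omega>) * h (X \<omega>) * ((\<pi> ssb + \<pi> sbsb) / \<pi> sbsb) \<partial>M)"
  proof -
    have "AE \<omega> in M. (e ssb (X \<omega>) + e sbsb (X \<omega>)) * (w0_sbsb e \<pi> (X \<omega>) * h (X \<omega>)) = e sbsb (X \<omega>) * h (X \<omega>) * ((\<pi> ssb + \<pi> sbsb) / \<pi> sbsb)"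
      using den0 proof eventually_elim
      case (elim \<omega>) thus ?case unfolding w0_sbsb_def by (intro alg) (use p1 p3 in auto)
    qed
    thus ?thesis by (intro integral_cong_AE) (measurable)
  qed
  also have "(\<integral>\<omega>. e sbsb (X \<omega>) * h (X \<omega>) * ((\<pi> ssb + \<pi> sbsb) / \<pi> sbsb) \<partial>M) / (\<pi> ssb + \<pi> sbsb) = T sbsb" unfolding T_def integral_mult_left_zero by (rule alg2) (use p1 p3 in auto)
  finally have R2: "cond_exp_event M {\<omega>\<in>space M. \<not> Z \<omega> \<and> \<not> S \<omega>} (\<lambda>\<omega>. w0_sbsb e \<pi> (X \<omega>) * h (X \<omega>)) = T sbsb" .
  have "cond_exp_event M {\<omega>\<in>space M. Z \<omega> \<and> S \<omega>} (\<lambda>\<omega>. w1_ss e \<pi> (X \<omega>) * h (X \<omega>))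
      = (\<integral>\<omega>. (e ss (X \<omega>) + e ssb (X \<omega>)) * (w1_ss e \<pi> (X \<omega>) * h (X \<omega>)) \<partial>M) / (\<pi> ss + \<pi> ssb)"
    unfolding ev1 using condC[of "\<lambda>x. w1_ss e \<pi> x * h x" True "\<lambda>a b. a"] pos_Z1S1 ev1 i1[of "\<lambda>x. w1_ss e \<pi> x * h x"] m1 by simp
  also have "(\<integral>\<omega>. (e ss (X \<omega>) + e ssb (X \<omega>)) * (w1_ss e \<pi> (X \<omega>) * h (X \<omega>)) \<partial>M)
      = (\<integral>\<omega>. e ss (X \<omega>) * h (X \<omega>) * ((\<pi> ssb + \<pi> ss) / \<pi> ss) \<partial>M)"
  proof -
    have "AE \<omega> in M. (e ss (X \<omega>) + e ssb (X \<omega>)) * (w1_ss e \<pi> (X \<omega>) * h (X \<omega>)) = e ss (X \<omega>) * h (X \<omega>) * ((\<pi> ssb + \<pi> ss) / \<pi> ss)"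
      using den1 proof eventually_elim
      case (elim \<omega>) thus ?case unfolding w1_ss_def by (intro alg) (use p1 p2 in auto)
    qed
    thus ?thesis by (intro integral_cong_AE) (measurable)
  qed
  also have "(\<integral>\<omega>. e ss (X \<omega>) * h (X \<omega>) * ((\<pi> ssb + \<pi> ss) / \<pi> ss) \<partial>M) / (\<pi> ss + \<pi> ssb) = T ss" unfolding T_def integral_mult_left_zero by (rule alg2) (use p1 p2 in auto)
  finally have L3: "cond_exp_event M {\<omega>\<in>space M. Z \<omega> \<and> S \<omega>} (\<lambda>\<omega>. w1_ss e \<pi> (X \<omega>) * h (X \<omega>)) = T ss" .
  have R3: "cond_exp_event M {\<omega>\<in>space M. \<not> Z \<omega> \<and> S \<omega>} (\<lambda>\<omega>. h (X \<omega>)) = T ss"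
    unfolding ev4 T_def using condC[of h False "\<lambda>a b. b"] pos_Z0S1 ev4 i4[of h] m4 by simp
  show ?thesis using L1 R1 L2 R2 L3 R3 by simp
qed

end
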